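(* Let $Y$ be a complex Banach space, let $I'\subseteq I\subseteq\mathbb R^n$ with $I+I'\subseteq I$ and $I'$ unbounded, let $F:I\to Y$ be uniformly continuous and Bohr $I'$-almost periodic (respectively, uniformly continuous and $I'$-uniformly recurrent), let $S\subseteq\mathbb R^n$ be bounded, and assume: (AP-E) for every $\mathbf t'\in\mathbb R^n$ there exists a finite $M>0$ such that $\mathbf t'+I'_M\subseteq I$. Set $\Omega_S:=[(I'\cup(-I'))+(I'\cup(-I'))]\cup S$. Then there exists a uniformly continuous, Bohr $\Omega_S$-almost periodic (respectively, uniformly continuous, $\Omega_S$-uniformly recurrent) function $\tilde F:\mathbb R^n\to Y$ with $\tilde F(\mathbf t)=F(\mathbf t)$ for all $\mathbf t\in I$; moreover, in the almost periodic case, such a function $\tilde F$ is unique provided that $\mathbb R^n\setminus\Omega_S$ is bounded.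
   Context: $I'_M:=\{\lambda\in I':|\lambda|\ge M\}$; $B(\mathbf t_0,l)$ is the closed Euclidean ball. For $J'\subseteq J\subseteq\mathbb R^n$ with $J+J'\subseteq J$, a continuous $G:J\to Y$ is Bohr $J'$-almost periodic if for every $\epsilon>0$ there exists $l>0$ such that for each $\mathbf t_0\in J'$ there exists $\tau\in B(\mathbf t_0,l)\cap J'$ with $\|G(\mathbf t+\tau)-G(\mathbf t)\|_Y\le\epsilon$ for all $\mathbf t\in J$; $G$ is $J'$-uniformly recurrent if there is a sequence $(\tau_k)$ in $J'$ with $|\tau_k|\to\infty$ and $\lim_{k\to\infty}\sup_{\mathbf t\in J}\|G(\mathbf t+\tau_k)-G(\mathbf t)\|_Y=0$. (Here these notions are applied with $J=I$, $J'=I'$, and with $J=\mathbb R^n$, $J'=\Omega_S$.) *)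

theory Defs
  imports "HOL-Analysis.Analysis"
begin

definition bohr_ap :: "'a::euclidean_space set \<Rightarrow> 'a set \<Rightarrow> ('a \<Rightarrow> 'b::real_normed_vector) \<Rightarrow> bool" where
  "bohr_ap J J' G \<longleftrightarrow> continuous_on J G \<and>
     (\<forall>\<epsilon>>0. \<exists>l>0. \<forall>t0\<in>J'. \<exists>\<tau>\<in>cball t0 l \<inter> J'. \<forall>t\<in>J. norm (G (t + \<tau>) - G t) \<le> \<epsilon>)"

text \<open>J'-uniform recurrence: a sequence tau_k in J' with |tau_k| to infinity and
  sup_{t in J} |G(t+tau_k) - G t| to 0 (written with epsilon, allowing infinite sups early on).\<close>
definition unif_recurrent :: "'a::euclidean_space set \<Rightarrow> 'a set \<Rightarrow> ('a \<Rightarrow> 'b::real_normed_vector) \<Rightarrow> bool" where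
  "unif_recurrent J J' G \<longleftrightarrow> continuous_on J G \<and>
     (\<exists>\<tau>::nat \<Rightarrow> 'a. (\<forall>k. \<tau> k \<in> J') \<and> filterlim (\<lambda>k. norm (\<tau> k)) at_top sequentially \<and>
        (\<forall>\<epsilon>>0. eventually (\<lambda>k. \<forall>t\<in>J. norm (G (t + \<tau> k) - G t) \<le> \<epsilon>) sequentially))"

definition trunc_set :: "'a::real_normed_vector set \<Rightarrow> real \<Rightarrow> 'a set" where
  "trunc_set I' M = {x\<in>I'. norm x \<ge> M}"

definition Omega_S :: "'a::real_normed_vector set \<Rightarrow> 'a set \<Rightarrow> 'a set" where
  "Omega_S I' S = {x + y | x y. x \<in> I' \<union> uminus ` I' \<and> y \<in> I' \<union> uminus ` I'} \<union> S"

end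

theory Submission
  imports Defs
begin


lemma lim_norm_le:
  fixes X Y :: "nat \<Rightarrow> 'b::real_normed_vector"
  assumes "X \<longlonglongrightarrow> a" "Y \<longlonglongrightarrow> b" "eventually (\<lambda>k. norm (X k - Y k) \<le> e) sequentially"
  shows "norm (a - b) \<le> e"
proof -
  have "(\<lambda>k. norm (X k - Y k)) \<longlonglongrightarrow> norm (a - b)"
    by (intro tendsto_norm tendsto_diff assms)
  moreover have "(\<lambda>k. e) \<longlonglongrightarrow> e" by simp
  ultimately show ?thesis using assms(3) by (intro tendsto_le[of sequentially]) auto
qed

lemma ev_in_I:
  fixes \<tau> :: "nat \<Rightarrow> 'a::real_normed_vector"
  assumes APE: "\<forall>t'. \<exists>M>0. (\<lambda>x. t' + x) ` trunc_set I' M \<subseteq> I"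
    and tI: "\<forall>k. \<tau> k \<in> I'" and tinf: "filterlim (\<lambda>k. norm (\<tau> k)) at_top sequentially"
  shows "eventually (\<lambda>k. t + \<tau> k \<in> I) sequentially"
proof -
  obtain M where M: "(\<lambda>x. t + x) ` trunc_set I' M \<subseteq> I" using APE by blast
  have "eventually (\<lambda>k. M \<le> norm (\<tau> k)) sequentially" using tinf by (simp add: filterlim_at_top)
  then show ?thesis
    by eventually_elim (use M tI in \<open>auto simp: trunc_set_def\<close>)
qed

lemma ext_exists:
  fixes F :: "'a::euclidean_space \<Rightarrow> 'b::banach" and \<tau> :: "nat \<Rightarrow> 'a"
  assumes add: "\<And>t \<tau>. t \<in> I \<Longrightarrow> \<tau> \<in> I' \<Longrightarrow> t + \<tau> \<in> I"
    and APE: "\<forall>t'. \<exists>M>0. (\<lambda>x. t' + x) ` trunc_set I' M \<subseteq> I"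
    and UC: "uniformly_continuous_on I F"
    and tI: "\<forall>k. \<tau> k \<in> I'" and tinf: "filterlim (\<lambda>k. norm (\<tau> k)) at_top sequentially"
    and tc: "\<forall>\<epsilon>>0. eventually (\<lambda>k. \<forall>t\<in>I. norm (F (t + \<tau> k) - F t) \<le> \<epsilon>) sequentially"
  shows "\<exists>Ft. uniformly_continuous_on UNIV Ft \<and> (\<forall>t\<in>I. Ft t = F t) \<and>
     (\<forall>\<sigma> \<epsilon>. \<sigma> \<in> I' \<longrightarrow> (\<forall>t\<in>I. norm (F (t + \<sigma>) - F t) \<le> \<epsilon>) \<longrightarrow>
         (\<forall>t. norm (Ft (t + \<sigma>) - Ft t) \<le> \<epsilon>))"
proof -
  have evI: "\<And>t. eventually (\<lambda>k. t + \<tau> k \<in> I) sequentially"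
    using ev_in_I[OF APE tI tinf] .
  have cauchy: "Cauchy (\<lambda>k. F (t + \<tau> k))" for t
  proof (rule CauchyI)
    fix e :: real assume e: "0 < e"
    have "eventually (\<lambda>k. t + \<tau> k \<in> I \<and> (\<forall>s\<in>I. norm (F (s + \<tau> k) - F s) \<le> e/3)) sequentially"
      using eventually_conj[OF evI[of t] tc[rule_format, of "e/3"]] e by simp
    then obtain N where N: "\<And>k. k \<ge> N \<Longrightarrow> t + \<tau> k \<in> I \<and> (\<forall>s\<in>I. norm (F (s + \<tau> k) - F s) \<le> e/3)"
      by (auto simp: eventually_sequentially)
    show "\<exists>M. \<forall>m\<ge>M. \<forall>n\<ge>M. norm (F (t + \<tau> m) - F (t + \<tau> n)) < e"
    proof (intro exI allI impI)
      fix m n assume mn: "N \<le> m" "N \<le> n"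
      have 1: "norm (F (t + \<tau> m + \<tau> n) - F (t + \<tau> m)) \<le> e/3" using N[OF mn(1)] N[OF mn(2)] by blast
      have 2: "norm (F (t + \<tau> n + \<tau> m) - F (t + \<tau> n)) \<le> e/3" using N[OF mn(1)] N[OF mn(2)] by blast
      have eq: "t + \<tau> n + \<tau> m = t + \<tau> m + \<tau> n" by (simp add: algebra_simps)
      have "F (t + \<tau> m) - F (t + \<tau> n) = (F (t + \<tau> n + \<tau> m) - F (t + \<tau> n)) - (F (t + \<tau> m + \<tau> n) - F (t + \<tau> m))"
        unfolding eq by simp
      then have "norm (F (t + \<tau> m) - F (t + \<tau> n)) \<le> norm (F (t + \<tau> m + \<tau> n) - F (t + \<tau> m)) + norm (F (t + \<tau> n + \<tau> m) - F (t + \<tau> n))"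
        using norm_triangle_ineq4 by (metis add.commute)
      then show "norm (F (t + \<tau> m) - F (t + \<tau> n)) < e" using 1 2 e by linarith
    qed
  qed
  define Ft where "Ft t = lim (\<lambda>k. F (t + \<tau> k))" for t
  have conv: "(\<lambda>k. F (t + \<tau> k)) \<longlonglongrightarrow> Ft t" for t
    unfolding Ft_def using Cauchy_convergent[OF cauchy] convergent_LIMSEQ_iff by blast
  have onI: "\<forall>t\<in>I. Ft t = F t"
  proof
    fix t assume t: "t \<in> I"
    have le: "norm (Ft t - F t) \<le> e" if e: "e > 0" for e
      by (rule lim_norm_le[OF conv tendsto_const]) (use tc[rule_format, OF e] t in \<open>auto elim: eventually_mono\<close>)
    have "norm (Ft t - F t) \<le> 0"
    proof (rule field_le_epsilon)
      fix e :: real assume "0 < e" then show "norm (Ft t - F t) \<le> 0 + e" using le by simp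
    qed
    then show "Ft t = F t" by simp
  qed
  have per: "\<forall>\<sigma> \<epsilon>. \<sigma> \<in> I' \<longrightarrow> (\<forall>t\<in>I. norm (F (t + \<sigma>) - F t) \<le> \<epsilon>) \<longrightarrow>
         (\<forall>t. norm (Ft (t + \<sigma>) - Ft t) \<le> \<epsilon>)"
  proof (intro allI impI)
    fix \<sigma> \<epsilon> t assume s: "\<sigma> \<in> I'" "\<forall>t\<in>I. norm (F (t + \<sigma>) - F t) \<le> \<epsilon>"
    have c1: "(\<lambda>k. F (t + \<tau> k + \<sigma>)) \<longlonglongrightarrow> Ft (t + \<sigma>)"
      using conv[of "t + \<sigma>"] by (simp add: algebra_simps)
    show "norm (Ft (t + \<sigma>) - Ft t) \<le> \<epsilon>"
      by (rule lim_norm_le[OF c1 conv]) (use evI[of t] s in \<open>auto elim: eventually_mono\<close>)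
  qed
  have uc: "uniformly_continuous_on UNIV Ft"
    unfolding uniformly_continuous_on_def
  proof (intro allI impI)
    fix e :: real assume e: "e > 0"
    obtain d where d: "d > 0" "\<forall>x\<in>I. \<forall>x'\<in>I. dist x' x < d \<longrightarrow> dist (F x') (F x) < e/2"
      using UC e unfolding uniformly_continuous_on_def by (meson half_gt_zero)
    show "\<exists>d>0. \<forall>x\<in>UNIV. \<forall>x'\<in>UNIV. dist x' x < d \<longrightarrow> dist (Ft x') (Ft x) < e"
    proof (intro exI conjI ballI impI, rule d(1))
      fix x x' :: 'a assume xx: "dist x' x < d"
      have "norm (Ft x' - Ft x) \<le> e/2"
      proof (rule lim_norm_le[OF conv conv])
        show "eventually (\<lambda>k. norm (F (x' + \<tau> k) - F (x + \<tau> k)) \<le> e/2) sequentially"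
          using evI[of x] evI[of x']
        proof eventually_elim
          case (elim k)
          have "dist (x' + \<tau> k) (x + \<tau> k) < d" using xx by (simp add: dist_norm)
          then show ?case using d(2) elim by (simp add: dist_norm less_imp_le)
        qed
      qed
      then show "dist (Ft x') (Ft x) < e" using e by (simp add: dist_norm)
    qed
  qed
  show ?thesis using uc onI per by blast
qed



lemma norm5:
  fixes a b c d e :: "'b::real_normed_vector"
  shows "norm (a + b + c + d + e) \<le> norm a + norm b + norm c + norm d + norm e"
  using norm_triangle_ineq[of "a+b+c+d" e] norm_triangle_ineq[of "a+b+c" d]
    norm_triangle_ineq[of "a+b" c] norm_triangle_ineq[of a b] by linarith

lemma unbounded_big:
  fixes I' :: "'a::real_normed_vector set"
  assumes "\<not> bounded I'" shows "\<exists>p\<in>I'. norm p > M"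
  using assms unfolding bounded_iff by (meson not_le)

lemma Omega_sum:
  assumes "x \<in> I' \<union> uminus ` I'" "y \<in> I' \<union> uminus ` I'"
  shows "x + y \<in> Omega_S I' S"
  using assms unfolding Omega_S_def by blast

lemma period_transfer:
  fixes G F :: "'a::euclidean_space \<Rightarrow> 'b::real_normed_vector"
  assumes add: "\<And>t \<tau>. t \<in> I \<Longrightarrow> \<tau> \<in> I' \<Longrightarrow> t + \<tau> \<in> I"
    and APE: "\<forall>t'. \<exists>M>0. (\<lambda>x. t' + x) ` trunc_set I' M \<subseteq> I"
    and unb: "\<not> bounded I'"
    and UCG: "uniformly_continuous_on UNIV G"
    and BG: "bohr_ap UNIV (Omega_S I' S) G"
    and GF: "\<forall>t\<in>I. G t = F t"
    and tau: "\<tau> \<in> I'"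
    and Fper: "\<forall>x\<in>I. norm (F (x + \<tau>) - F x) \<le> \<epsilon>"
    and eps: "\<epsilon> > 0"
  shows "norm (G (s + \<tau>) - G s) \<le> 5 * \<epsilon>"
proof -
  obtain d where d: "d > 0" "\<And>x x'. dist x' x < d \<Longrightarrow> dist (G x') (G x) < \<epsilon>"
    using UCG eps unfolding uniformly_continuous_on_def by blast
  obtain l where l: "l > 0" "\<forall>t0\<in>Omega_S I' S. \<exists>\<sigma>\<in>cball t0 l \<inter> Omega_S I' S. \<forall>t\<in>UNIV. norm (G (t + \<sigma>) - G t) \<le> \<epsilon>"
    using BG eps unfolding bohr_ap_def by blast
  have cov: "cball s l \<subseteq> \<Union> ((\<lambda>x. ball x d) ` cball s l)" using d(1) by force
  obtain X where X: "X \<subseteq> cball s l" "finite X" "cball s l \<subseteq> \<Union> ((\<lambda>x. ball x d) ` X)"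
    using compactE_image[OF compact_cball _ cov] by blast
  obtain Mf where Mf: "\<And>x. Mf x > 0 \<and> (\<lambda>y. x + y) ` trunc_set I' (Mf x) \<subseteq> I"
    using APE by metis
  define M where "M = sum Mf X"
  have MfM: "Mf x \<le> M" if "x \<in> X" for x
    unfolding M_def using that X(2) Mf by (intro member_le_sum) (auto intro: less_imp_le)
  obtain p where p: "p \<in> I'" "norm p > M" using unbounded_big[OF unb] by blast
  have xp: "x + p \<in> I" if "x \<in> X" for x
  proof -
    have "p \<in> trunc_set I' (Mf x)" using p MfM[OF that] unfolding trunc_set_def by auto
    then show ?thesis using Mf[of x] by blast
  qed
  define q where "q = p + p"
  have q: "q \<in> Omega_S I' S" unfolding q_def using p(1) by (intro Omega_sum) auto
  obtain \<sigma> where \<sigma>: "\<sigma> \<in> cball q l" "\<sigma> \<in> Omega_S I' S" "\<And>t. norm (G (t + \<sigma>) - G t) \<le> \<epsilon>"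
    using l(2) q by blast
  have "s + \<sigma> - q \<in> cball s l" using \<sigma>(1) by (simp add: dist_norm norm_minus_commute)
  then obtain x where x: "x \<in> X" "dist x (s + \<sigma> - q) < d" using X(3) by auto
  define z where "z = x + q"
  have zI: "z \<in> I" unfolding z_def q_def using add[OF xp[OF x(1)] p(1)] by (simp add: add.assoc)
  have zt: "z + \<tau> \<in> I" using add[OF zI tau] .
  have dz: "dist z (s + \<sigma>) < d" using x(2) unfolding z_def by (simp add: dist_norm algebra_simps)
  have dzt: "dist (z + \<tau>) (s + \<sigma> + \<tau>) < d" using dz by (simp add: dist_norm algebra_simps)
  have n1: "norm (G (s + \<tau>) - G (s + \<tau> + \<sigma>)) \<le> \<epsilon>" using \<sigma>(3)[of "s + \<tau>"] by (simp add: norm_minus_commute)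
  have n2: "norm (G (s + \<sigma> + \<tau>) - G (z + \<tau>)) \<le> \<epsilon>" using d(2)[OF dzt] by (simp add: dist_norm norm_minus_commute)
  have n3: "norm (G (z + \<tau>) - G z) \<le> \<epsilon>" using Fper zI zt GF by auto
  have n4: "norm (G z - G (s + \<sigma>)) \<le> \<epsilon>" using d(2)[of "s + \<sigma>" z] dz by (simp add: dist_norm norm_minus_commute dist_commute)
  have n5: "norm (G (s + \<sigma>) - G s) \<le> \<epsilon>" using \<sigma>(3)[of s] .
  have eq: "s + \<tau> + \<sigma> = s + \<sigma> + \<tau>" by (simp add: algebra_simps)
  have "G (s + \<tau>) - G s = (G (s + \<tau>) - G (s + \<tau> + \<sigma>)) + (G (s + \<sigma> + \<tau>) - G (z + \<tau>)) + (G (z + \<tau>) - G z) + (G z - G (s + \<sigma>)) + (G (s + \<sigma>) - G s)"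
    unfolding eq by simp
  then have "norm (G (s + \<tau>) - G s) \<le> norm (G (s + \<tau>) - G (s + \<tau> + \<sigma>)) + norm (G (s + \<sigma> + \<tau>) - G (z + \<tau>)) + norm (G (z + \<tau>) - G z) + norm (G z - G (s + \<sigma>)) + norm (G (s + \<sigma>) - G s)"
    by (metis norm5)
  then show ?thesis using n1 n2 n3 n4 n5 by linarith
qed



lemma ap_seq:
  fixes F :: "'a::euclidean_space \<Rightarrow> 'b::real_normed_vector"
  assumes BF: "bohr_ap I I' F" and unb: "\<not> bounded I'"
  shows "\<exists>\<tau>::nat \<Rightarrow> 'a. (\<forall>k. \<tau> k \<in> I') \<and> filterlim (\<lambda>k. norm (\<tau> k)) at_top sequentially \<and>
        (\<forall>\<epsilon>>0. eventually (\<lambda>k. \<forall>t\<in>I. norm (F (t + \<tau> k) - F t) \<le> \<epsilon>) sequentially)"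
proof -
  have "\<exists>\<tau>. \<tau> \<in> I' \<and> real k \<le> norm \<tau> \<and> (\<forall>t\<in>I. norm (F (t + \<tau>) - F t) \<le> 1 / (real k + 1))" for k
  proof -
    have e: "1 / (real k + 1) > 0" by simp
    obtain l where l: "l > 0" "\<forall>t0\<in>I'. \<exists>\<tau>\<in>cball t0 l \<inter> I'. \<forall>t\<in>I. norm (F (t + \<tau>) - F t) \<le> 1 / (real k + 1)"
      using BF e unfolding bohr_ap_def by blast
    obtain t0 where t0: "t0 \<in> I'" "norm t0 > real k + l" using unbounded_big[OF unb] by blast
    obtain \<tau> where \<tau>: "\<tau> \<in> cball t0 l" "\<tau> \<in> I'" "\<forall>t\<in>I. norm (F (t + \<tau>) - F t) \<le> 1 / (real k + 1)"
      using l(2) t0(1) by blast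
    have "norm t0 \<le> norm \<tau> + norm (t0 - \<tau>)" using norm_triangle_ineq[of \<tau> "t0 - \<tau>"] by simp
    moreover have "norm (t0 - \<tau>) \<le> l" using \<tau>(1) by (simp add: dist_norm)
    ultimately have "real k \<le> norm \<tau>" using t0(2) by linarith
    then show ?thesis using \<tau> by blast
  qed
  then obtain \<tau> where \<tau>: "\<And>k. \<tau> k \<in> I' \<and> real k \<le> norm (\<tau> k) \<and> (\<forall>t\<in>I. norm (F (t + \<tau> k) - F t) \<le> 1 / (real k + 1))"
    by metis
  have lim: "filterlim (\<lambda>k. norm (\<tau> k)) at_top sequentially"
    by (rule filterlim_at_top_mono[OF filterlim_real_sequentially]) (use \<tau> in auto)
  have ev: "eventually (\<lambda>k. \<forall>t\<in>I. norm (F (t + \<tau> k) - F t) \<le> \<epsilon>) sequentially" if e: "\<epsilon> > 0" for \<epsilon>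
  proof -
    obtain N :: nat where N: "1 / \<epsilon> < real N" using reals_Archimedean2 by blast
    have "1 / (real k + 1) \<le> \<epsilon>" if "k \<ge> N" for k
    proof -
      have "1 / \<epsilon> < real k + 1" using N that by linarith
      then have "1 < \<epsilon> * (real k + 1)" using e by (simp add: field_simps)
      then show ?thesis using e by (simp add: field_simps)
    qed
    then show ?thesis unfolding eventually_sequentially using \<tau> by (meson order_trans)
  qed
  show ?thesis using \<tau> lim ev by blast
qed



theorem theorem2p35:
  fixes F :: "'a::euclidean_space \<Rightarrow> 'b::banach"
    and I I' S :: "'a set"
  assumes sub: "I' \<subseteq> I"
    and add: "\<And>t \<tau>. t \<in> I \<Longrightarrow> \<tau> \<in> I' \<Longrightarrow> t + \<tau> \<in> I"
    and unb: "\<not> bounded I'"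
    and bS: "bounded S"
    and APE: "\<forall>t'. \<exists>M>0. (\<lambda>x. t' + x) ` trunc_set I' M \<subseteq> I"
  shows "(uniformly_continuous_on I F \<and> bohr_ap I I' F \<longrightarrow>
            (\<exists>Ft. uniformly_continuous_on UNIV Ft \<and> bohr_ap UNIV (Omega_S I' S) Ft \<and>
                  (\<forall>t\<in>I. Ft t = F t)) \<and>
            (bounded (UNIV - Omega_S I' S) \<longrightarrow>
               (\<forall>G1 G2. uniformly_continuous_on UNIV G1 \<and> bohr_ap UNIV (Omega_S I' S) G1 \<and>
                        (\<forall>t\<in>I. G1 t = F t) \<and>
                        uniformly_continuous_on UNIV G2 \<and> bohr_ap UNIV (Omega_S I' S) G2 \<and>
                        (\<forall>t\<in>I. G2 t = F t) \<longrightarrow> G1 = G2)))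
         \<and> (uniformly_continuous_on I F \<and> unif_recurrent I I' F \<longrightarrow>
            (\<exists>Ft. uniformly_continuous_on UNIV Ft \<and> unif_recurrent UNIV (Omega_S I' S) Ft \<and>
                  (\<forall>t\<in>I. Ft t = F t)))"
proof (intro conjI impI)
  assume H: "uniformly_continuous_on I F \<and> bohr_ap I I' F"
  obtain \<tau> where \<tau>: "\<forall>k. \<tau> k \<in> I'" "filterlim (\<lambda>k. norm (\<tau> k)) at_top sequentially"
      "\<forall>\<epsilon>>0. eventually (\<lambda>k. \<forall>t\<in>I. norm (F (t + \<tau> k) - F t) \<le> \<epsilon>) sequentially"
    using ap_seq[of I I' F] H unb by blast
  obtain Ft where Ft: "uniformly_continuous_on UNIV Ft" "\<forall>t\<in>I. Ft t = F t"
     "\<And>\<sigma> \<epsilon> t. \<sigma> \<in> I' \<Longrightarrow> (\<forall>t\<in>I. norm (F (t + \<sigma>) - F t) \<le> \<epsilon>) \<Longrightarrow> norm (Ft (t + \<sigma>) - Ft t) \<le> \<epsilon>"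
    using ext_exists[OF add APE _ \<tau>] H by blast
  have "bohr_ap UNIV (Omega_S I' S) Ft"
    unfolding bohr_ap_def
  proof (intro conjI allI impI)
    show "continuous_on UNIV Ft" using Ft(1) uniformly_continuous_imp_continuous by blast
    fix \<epsilon> :: real assume e: "\<epsilon> > 0"
    obtain l where l: "l > 0" "\<forall>t0\<in>I'. \<exists>\<tau>\<in>cball t0 l \<inter> I'. \<forall>t\<in>I. norm (F (t + \<tau>) - F t) \<le> \<epsilon>/2"
      using H e unfolding bohr_ap_def by (meson half_gt_zero)
    obtain R where R: "\<forall>x\<in>S. norm x \<le> R" using bS unfolding bounded_iff by blast
    have pm: "\<exists>\<sigma>\<in>cball x l \<inter> (I' \<union> uminus ` I'). \<forall>t. norm (Ft (t + \<sigma>) - Ft t) \<le> \<epsilon>/2"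
      if x: "x \<in> I' \<union> uminus ` I'" for x
    proof (cases "x \<in> I'")
      case True
      then obtain \<sigma> where "\<sigma> \<in> cball x l" "\<sigma> \<in> I'" "\<forall>t\<in>I. norm (F (t + \<sigma>) - F t) \<le> \<epsilon>/2"
        using l(2) by blast
      then show ?thesis using Ft(3) by blast
    next
      case False
      then obtain u where u: "u \<in> I'" "x = - u" using x by blast
      then obtain \<sigma> where s: "\<sigma> \<in> cball u l" "\<sigma> \<in> I'" "\<forall>t\<in>I. norm (F (t + \<sigma>) - F t) \<le> \<epsilon>/2"
        using l(2) by blast
      have "norm (Ft (t + - \<sigma>) - Ft t) \<le> \<epsilon>/2" for t
        using Ft(3)[OF s(2) s(3), of "t - \<sigma>"] by (simp add: norm_minus_commute)
      moreover have "- \<sigma> \<in> cball x l" using s(1) u(2) by (simp add: dist_norm norm_minus_commute)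
      moreover have "- \<sigma> \<in> I' \<union> uminus ` I'" using s(2) by blast
      ultimately show ?thesis by blast
    qed
    show "\<exists>l>0. \<forall>t0\<in>Omega_S I' S. \<exists>\<tau>\<in>cball t0 l \<inter> Omega_S I' S. \<forall>t\<in>UNIV. norm (Ft (t + \<tau>) - Ft t) \<le> \<epsilon>"
    proof (intro exI conjI ballI)
      show "max (2 * l) R > 0" using l(1) by simp
      fix t0 assume t0: "t0 \<in> Omega_S I' S"
      show "\<exists>\<tau>\<in>cball t0 (max (2 * l) R) \<inter> Omega_S I' S. \<forall>t\<in>UNIV. norm (Ft (t + \<tau>) - Ft t) \<le> \<epsilon>"
      proof (cases "t0 \<in> S")
        case True
        obtain p where p: "p \<in> I'" using unbounded_big[OF unb] by blast
        have "p + - p \<in> Omega_S I' S" using p by (intro Omega_sum) auto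
        then have "0 \<in> Omega_S I' S" by simp
        moreover have "0 \<in> cball t0 (max (2 * l) R)" using R True by (force simp: dist_norm intro: max.coboundedI2)
        ultimately show ?thesis using e by (intro bexI[of _ 0]) auto
      next
        case False
        then obtain x y where xy: "t0 = x + y" "x \<in> I' \<union> uminus ` I'" "y \<in> I' \<union> uminus ` I'"
          using t0 unfolding Omega_S_def by blast
        obtain s1 where s1: "s1 \<in> cball x l" "s1 \<in> I' \<union> uminus ` I'" "\<And>t. norm (Ft (t + s1) - Ft t) \<le> \<epsilon>/2"
          using pm[OF xy(2)] by blast
        obtain s2 where s2: "s2 \<in> cball y l" "s2 \<in> I' \<union> uminus ` I'" "\<And>t. norm (Ft (t + s2) - Ft t) \<le> \<epsilon>/2"
          using pm[OF xy(3)] by blast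
        have "norm ((x + y) - (s1 + s2)) \<le> norm (x - s1) + norm (y - s2)"
          using norm_triangle_ineq[of "x - s1" "y - s2"] by (simp add: algebra_simps)
        then have "s1 + s2 \<in> cball t0 (max (2 * l) R)" using s1(1) s2(1) xy(1) by (simp add: dist_norm)
        moreover have "s1 + s2 \<in> Omega_S I' S" using s1(2) s2(2) by (rule Omega_sum)
        moreover have "norm (Ft (t + (s1 + s2)) - Ft t) \<le> \<epsilon>" for t
        proof -
          have "Ft (t + (s1 + s2)) - Ft t = (Ft ((t + s1) + s2) - Ft (t + s1)) + (Ft (t + s1) - Ft t)"
            by (simp add: add.assoc)
          then have "norm (Ft (t + (s1 + s2)) - Ft t) \<le> norm (Ft ((t + s1) + s2) - Ft (t + s1)) + norm (Ft (t + s1) - Ft t)"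
            by (metis norm_triangle_ineq)
          then show ?thesis using s1(3)[of t] s2(3)[of "t + s1"] by linarith
        qed
        ultimately show ?thesis by blast
      qed
    qed
  qed
  then show "\<exists>Ft. uniformly_continuous_on UNIV Ft \<and> bohr_ap UNIV (Omega_S I' S) Ft \<and> (\<forall>t\<in>I. Ft t = F t)"
    using Ft by blast
  show "\<forall>G1 G2. uniformly_continuous_on UNIV G1 \<and> bohr_ap UNIV (Omega_S I' S) G1 \<and>
                        (\<forall>t\<in>I. G1 t = F t) \<and>
                        uniformly_continuous_on UNIV G2 \<and> bohr_ap UNIV (Omega_S I' S) G2 \<and>
                        (\<forall>t\<in>I. G2 t = F t) \<longrightarrow> G1 = G2"
  proof (intro allI impI ext)
    fix G1 G2 t
    assume G: "uniformly_continuous_on UNIV G1 \<and> bohr_ap UNIV (Omega_S I' S) G1 \<and>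
                        (\<forall>t\<in>I. G1 t = F t) \<and>
                        uniformly_continuous_on UNIV G2 \<and> bohr_ap UNIV (Omega_S I' S) G2 \<and>
                        (\<forall>t\<in>I. G2 t = F t)"
    have le: "norm (G1 t - G2 t) \<le> 10 * \<epsilon>" if e: "\<epsilon> > 0" for \<epsilon>
    proof -
      have "eventually (\<lambda>k. t + \<tau> k \<in> I \<and> (\<forall>s\<in>I. norm (F (s + \<tau> k) - F s) \<le> \<epsilon>)) sequentially"
        using eventually_conj[OF ev_in_I[OF APE \<tau>(1,2)] \<tau>(3)[rule_format, OF e]] .
      then obtain k where k: "t + \<tau> k \<in> I" "\<forall>s\<in>I. norm (F (s + \<tau> k) - F s) \<le> \<epsilon>"
        by (auto simp: eventually_sequentially)
      have 1: "norm (G1 (t + \<tau> k) - G1 t) \<le> 5 * \<epsilon>"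
        using period_transfer[OF add APE unb, of G1 S F "\<tau> k" \<epsilon> t] G k(2) \<tau>(1) e by blast
      have 2: "norm (G2 (t + \<tau> k) - G2 t) \<le> 5 * \<epsilon>"
        using period_transfer[OF add APE unb, of G2 S F "\<tau> k" \<epsilon> t] G k(2) \<tau>(1) e by blast
      have eq: "G1 (t + \<tau> k) = G2 (t + \<tau> k)" using G k(1) by auto
      have "G1 t - G2 t = (G2 (t + \<tau> k) - G2 t) - (G1 (t + \<tau> k) - G1 t)" using eq by simp
      then have "norm (G1 t - G2 t) \<le> norm (G2 (t + \<tau> k) - G2 t) + norm (G1 (t + \<tau> k) - G1 t)"
        by (metis norm_triangle_ineq4)
      then show ?thesis using 1 2 by linarith
    qed
    have "norm (G1 t - G2 t) \<le> 0"
    proof (rule field_le_epsilon)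
      fix e :: real assume "0 < e"
      then show "norm (G1 t - G2 t) \<le> 0 + e" using le[of "e/10"] by simp
    qed
    then show "G1 t = G2 t" by simp
  qed
next
  assume H: "uniformly_continuous_on I F \<and> unif_recurrent I I' F"
  obtain \<tau> where \<tau>: "\<forall>k. \<tau> k \<in> I'" "filterlim (\<lambda>k. norm (\<tau> k)) at_top sequentially"
      "\<forall>\<epsilon>>0. eventually (\<lambda>k. \<forall>t\<in>I. norm (F (t + \<tau> k) - F t) \<le> \<epsilon>) sequentially"
    using H unfolding unif_recurrent_def by blast
  obtain Ft where Ft: "uniformly_continuous_on UNIV Ft" "\<forall>t\<in>I. Ft t = F t"
     "\<And>\<sigma> \<epsilon> t. \<sigma> \<in> I' \<Longrightarrow> (\<forall>t\<in>I. norm (F (t + \<sigma>) - F t) \<le> \<epsilon>) \<Longrightarrow> norm (Ft (t + \<sigma>) - Ft t) \<le> \<epsilon>"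
    using ext_exists[OF add APE _ \<tau>] H by blast
  have "unif_recurrent UNIV (Omega_S I' S) Ft"
    unfolding unif_recurrent_def
  proof (intro conjI exI[of _ "\<lambda>k. \<tau> k + \<tau> k"] allI impI)
    show "continuous_on UNIV Ft" using Ft(1) uniformly_continuous_imp_continuous by blast
    show "\<tau> k + \<tau> k \<in> Omega_S I' S" for k using \<tau>(1) by (intro Omega_sum) auto
    have "norm (\<tau> k) \<le> norm (\<tau> k + \<tau> k)" for k
    proof -
      have "\<tau> k + \<tau> k = 2 *\<^sub>R \<tau> k" by (simp add: scaleR_2)
      then show ?thesis by simp
    qed
    then show "filterlim (\<lambda>k. norm (\<tau> k + \<tau> k)) at_top sequentially"
      by (intro filterlim_at_top_mono[OF \<tau>(2)]) auto
    fix \<epsilon> :: real assume e: "\<epsilon> > 0"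
    show "eventually (\<lambda>k. \<forall>t\<in>UNIV. norm (Ft (t + (\<tau> k + \<tau> k)) - Ft t) \<le> \<epsilon>) sequentially"
    proof -
    have ev2: "eventually (\<lambda>k. \<forall>t\<in>I. norm (F (t + \<tau> k) - F t) \<le> \<epsilon>/2) sequentially"
      using \<tau>(3) e by (meson half_gt_zero)
    show ?thesis using ev2
    proof (elim eventually_mono, intro ballI)
      fix k t assume k: "\<forall>t\<in>I. norm (F (t + \<tau> k) - F t) \<le> \<epsilon>/2"
      have a: "norm (Ft (t + \<tau> k) - Ft t) \<le> \<epsilon>/2" "norm (Ft ((t + \<tau> k) + \<tau> k) - Ft (t + \<tau> k)) \<le> \<epsilon>/2"
        using Ft(3)[OF \<tau>(1)[rule_format] k] by blast+
      have "Ft (t + (\<tau> k + \<tau> k)) - Ft t = (Ft ((t + \<tau> k) + \<tau> k) - Ft (t + \<tau> k)) + (Ft (t + \<tau> k) - Ft t)"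
        by (simp add: add.assoc)
      then have "norm (Ft (t + (\<tau> k + \<tau> k)) - Ft t) \<le> norm (Ft ((t + \<tau> k) + \<tau> k) - Ft (t + \<tau> k)) + norm (Ft (t + \<tau> k) - Ft t)"
        by (metis norm_triangle_ineq)
      then show "norm (Ft (t + (\<tau> k + \<tau> k)) - Ft t) \<le> \<epsilon>" using a by linarith
    qed
    qed
  qed
  then show "\<exists>Ft. uniformly_continuous_on UNIV Ft \<and> unif_recurrent UNIV (Omega_S I' S) Ft \<and> (\<forall>t\<in>I. Ft t = F t)"
    using Ft by blast
qed


end
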